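(* Consider the monoid (algebra in sets) $M$ generated by $a,b,c,d,e,f,g,h,i,j,k,l$ with relations $da=eb$, $fb=hc$, $gb=ic$, $kh=li$, $je=kf=lg$, and the rewriting system $eb\to da$, $hc\to fb$, $gb\to ic$, $kf\to je$, $lg\to je$, $li\to kh$ (whose normal forms form a PBW basis of the linearised algebra). Let $\Pi$ be the poset with elements $A,B,S,U,V,W,X,Z$ and covering relations $A\prec B$ (labelled $a$), $A\prec S$ ($b$), $A\prec U$ ($c$), $B\prec V$ ($d$), $S\prec V$ ($e$), $S\prec W$ ($f$), $S\prec X$ ($g$), $U\prec W$ ($h$), $U\prec X$ ($i$), $V\prec Z$ ($j$), $W\prec Z$ ($k$), $X\prec Z$ ($l$), an interval of a partition poset of $M$; a chain read from bottom to top gives a word in $M$ read from right to left. Then $\Pi$ admits no CL-labelling such that $\Pi$ is CL-shellable and the minimal chains (for the lexicographic order of the CL-labelling) correspond to PBW elements of the algebra, i.e. to normal forms of this rewriting system.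
   Context: For an algebra in sets (monoid) presented by generators $E$ and homogeneous relations, the partition poset $\Pi^{(d)}$ has as elements the elements of weight at most $d$ lying below some element of weight $d$, with $x\le y$ iff $y=zx$ for some $z$; covering edges are labelled by the generator multiplied on the left. A chain-edge labelling of a poset assigns to each pair (maximal chain, covering edge on it) a label in a poset $\Lambda$, such that maximal chains agreeing on their bottom edges get the same labels there. It is a CL-labelling if in each rooted interval $[x,y]_r$ (interval $[x,y]$ together with a maximal chain $r$ of $[\hat0,x]$) there is a unique maximal chain with strictly increasing labels, and it lexicographically precedes all other maximal chains of the interval; a poset with a CL-labelling is CL-shellable. *)

theory Defs
  imports Main
begin

datatype pel = A | B | S | U | V | W | X | Z

datatype gen = Ga | Gb | Gc | Gd | Ge | Gf | Gg | Gh | Gi | Gj | Gk | Gl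

definition pi_edges :: "(pel \<times> gen \<times> pel) set" where
  "pi_edges = {(A,Ga,B), (A,Gb,S), (A,Gc,U), (B,Gd,V), (S,Ge,V), (S,Gf,W), (S,Gg,X),
               (U,Gh,W), (U,Gi,X), (V,Gj,Z), (W,Gk,Z), (X,Gl,Z)}"

definition pi_cov :: "pel \<Rightarrow> pel \<Rightarrow> bool" where
  "pi_cov x y \<longleftrightarrow> (\<exists>g. (x, g, y) \<in> pi_edges)"

definition pi_lab :: "pel \<Rightarrow> pel \<Rightarrow> gen" where
  "pi_lab x y = (THE g. (x, g, y) \<in> pi_edges)"

definition pi_le :: "pel \<Rightarrow> pel \<Rightarrow> bool" where
  "pi_le = pi_cov\<^sup>*\<^sup>*"

definition sat_chain :: "pel \<Rightarrow> pel \<Rightarrow> pel list \<Rightarrow> bool" where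
  "sat_chain x y c \<longleftrightarrow> c \<noteq> [] \<and> hd c = x \<and> last c = y \<and>
     (\<forall>i. Suc i < length c \<longrightarrow> pi_cov (c ! i) (c ! Suc i))"

definition maxchain :: "pel list \<Rightarrow> bool" where
  "maxchain m \<longleftrightarrow> sat_chain A Z m"

text \<open>A chain-edge labelling with values in the poset (Lam, L): lam m i is the label
  of the i-th edge (m!i, m!(i+1)) of the maximal chain m.\<close>
definition chain_edge_labelling :: "'l set \<Rightarrow> (pel list \<Rightarrow> nat \<Rightarrow> 'l) \<Rightarrow> bool" where
  "chain_edge_labelling Lam lam \<longleftrightarrow>
     (\<forall>m i. maxchain m \<and> Suc i < length m \<longrightarrow> lam m i \<in> Lam) \<and>
     (\<forall>m m' i. maxchain m \<and> maxchain m' \<and> Suc i < length m \<and>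
        take (Suc (Suc i)) m = take (Suc (Suc i)) m' \<longrightarrow> lam m i = lam m' i)"

text \<open>Labels of a chain c of [x,y] in the rooted interval [x,y]_r (r a maximal chain of [A,x]):
  the labels of the edges of c on a maximal chain extending r followed by c.\<close>
definition rlabels :: "(pel list \<Rightarrow> nat \<Rightarrow> 'l) \<Rightarrow> pel list \<Rightarrow> pel list \<Rightarrow> 'l list" where
  "rlabels lam r c =
     map (\<lambda>i. lam (SOME m. maxchain m \<and> (\<exists>s. m = r @ tl c @ s)) (length r - 1 + i))
         [0..<length c - 1]"

definition lab_less :: "'l rel \<Rightarrow> 'l \<Rightarrow> 'l \<Rightarrow> bool" where
  "lab_less L p q \<longleftrightarrow> (p, q) \<in> L \<and> p \<noteq> q"

definition strictly_increasing :: "'l rel \<Rightarrow> 'l list \<Rightarrow> bool" where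
  "strictly_increasing L ls \<longleftrightarrow> (\<forall>i. Suc i < length ls \<longrightarrow> lab_less L (ls ! i) (ls ! Suc i))"

definition lex_precedes :: "'l rel \<Rightarrow> 'l list \<Rightarrow> 'l list \<Rightarrow> bool" where
  "lex_precedes L ls ls' \<longleftrightarrow>
     (\<exists>k. k < length ls \<and> k < length ls' \<and> take k ls = take k ls' \<and> lab_less L (ls ! k) (ls' ! k))"

definition is_CL_labelling :: "'l rel \<Rightarrow> (pel list \<Rightarrow> nat \<Rightarrow> 'l) \<Rightarrow> bool" where
  "is_CL_labelling L lam \<longleftrightarrow>
     (\<forall>x y r. sat_chain A x r \<and> pi_le x y \<longrightarrow>
        (\<exists>!c. sat_chain x y c \<and> strictly_increasing L (rlabels lam r c)) \<and>
        (\<forall>c c'. sat_chain x y c \<and> strictly_increasing L (rlabels lam r c) \<and>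
                sat_chain x y c' \<and> c' \<noteq> c \<longrightarrow>
                lex_precedes L (rlabels lam r c) (rlabels lam r c')))"

text \<open>Word of the monoid read off a chain: read from bottom to top, written from right to left
  (so the list head is the leftmost letter).\<close>
definition chain_word :: "pel list \<Rightarrow> gen list" where
  "chain_word c = rev (map (\<lambda>i. pi_lab (c ! i) (c ! Suc i)) [0..<length c - 1])"

definition rw_rules :: "(gen list \<times> gen list) list" where
  "rw_rules = [([Ge,Gb],[Gd,Ga]), ([Gh,Gc],[Gf,Gb]), ([Gg,Gb],[Gi,Gc]),
               ([Gk,Gf],[Gj,Ge]), ([Gl,Gg],[Gj,Ge]), ([Gl,Gi],[Gk,Gh])]"

definition normal_form :: "gen list \<Rightarrow> bool" where
  "normal_form w \<longleftrightarrow> \<not> (\<exists>(lhs, rhs) \<in> set rw_rules. \<exists>p s. w = p @ lhs @ s)"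

definition minimal_chains_PBW :: "'l rel \<Rightarrow> (pel list \<Rightarrow> nat \<Rightarrow> 'l) \<Rightarrow> bool" where
  "minimal_chains_PBW L lam \<longleftrightarrow>
     (\<forall>x y r c. sat_chain A x r \<and> sat_chain x y c \<and>
        (\<forall>c'. sat_chain x y c' \<and> c' \<noteq> c \<longrightarrow> lex_precedes L (rlabels lam r c) (rlabels lam r c'))
        \<longrightarrow> normal_form (chain_word c))"

end

theory Submission
  imports Defs
begin

fun rk :: "pel \<Rightarrow> nat" where
  "rk A = 0" | "rk B = 1" | "rk S = 1" | "rk U = 1" | "rk V = 2" | "rk W = 2" | "rk X = 2" | "rk Z = 3"

function allp :: "pel \<Rightarrow> pel list list" where
  "allp Z = [[Z]]"
| "allp V = [[V],[V,Z]]"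
| "allp W = [[W],[W,Z]]"
| "allp X = [[X],[X,Z]]"
| "allp B = [B] # map (Cons B) (allp V)"
| "allp S = [S] # map (Cons S) (allp V @ allp W @ allp X)"
| "allp U = [U] # map (Cons U) (allp W @ allp X)"
| "allp A = [A] # map (Cons A) (allp B @ allp S @ allp U)"
  by pat_completeness auto
termination by (relation "measure (\<lambda>x. 3 - rk x)") auto

lemma pi_cov_iff: "pi_cov x y \<longleftrightarrow> (x,y) \<in> {(A,B),(A,S),(A,U),(B,V),(S,V),(S,W),(S,X),(U,W),(U,X),(V,Z),(W,Z),(X,Z)}"
  by (cases x; cases y) (simp_all add: pi_cov_def pi_edges_def)

lemma sat_nil[simp]: "\<not> sat_chain x y []" by (simp add: sat_chain_def)
lemma sat_one[simp]: "sat_chain x y [a] \<longleftrightarrow> a = x \<and> a = y" by (auto simp add: sat_chain_def)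
lemma sat_two[simp]: "sat_chain x y (a#b#rest) \<longleftrightarrow> a = x \<and> pi_cov a b \<and> sat_chain b y (b#rest)"
proof -
  have "(\<forall>i. Suc i < length (a#b#rest) \<longrightarrow> pi_cov ((a#b#rest) ! i) ((a#b#rest) ! Suc i))
     \<longleftrightarrow> pi_cov a b \<and> (\<forall>i. Suc i < length (b#rest) \<longrightarrow> pi_cov ((b#rest) ! i) ((b#rest) ! Suc i))"
    (is "?l \<longleftrightarrow> ?r")
  proof
    assume ?l
    then show ?r by (metis Suc_less_eq length_Cons nth_Cons_Suc nth_Cons_0 zero_less_Suc)
  next
    assume ?r
    show ?l
    proof (intro allI impI)
      fix i assume "Suc i < length (a#b#rest)"
      then show "pi_cov ((a#b#rest) ! i) ((a#b#rest) ! Suc i)" using \<open>?r\<close>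
        by (cases i) auto
    qed
  qed
  then show ?thesis by (auto simp add: sat_chain_def)
qed

lemma allp_step: "pi_cov x z \<Longrightarrow> p \<in> set (allp z) \<Longrightarrow> x # p \<in> set (allp x)"
  by (cases x; cases z) (auto simp: pi_cov_iff)

lemma sat_allp: "sat_chain x y c \<Longrightarrow> c \<in> set (allp x)"
proof (induction c arbitrary: x)
  case Nil then show ?case by simp
next
  case (Cons a rest)
  note IH = Cons.IH and pr = Cons.prems
  show ?case
  proof (cases rest)
    case Nil then show ?thesis using pr by (cases x) auto
  next
    case (Cons b r2)
    with pr have ax: "a = x" and cv: "pi_cov x b" and sb: "sat_chain b y rest" by auto
    from IH[OF sb] have "rest \<in> set (allp b)" .
    with ax cv allp_step show ?thesis by blast
  qed
qed

lemma maxchain_iff: "maxchain m \<longleftrightarrow> m \<in> {[A,B,V,Z],[A,S,V,Z],[A,S,W,Z],[A,S,X,Z],[A,U,W,Z],[A,U,X,Z]}"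
proof
  assume "maxchain m"
  then have "sat_chain A Z m" by (simp add: maxchain_def)
  moreover then have "m \<in> set (allp A)" by (rule sat_allp)
  moreover have "last m = Z" using calculation by (simp add: sat_chain_def)
  ultimately show "m \<in> {[A,B,V,Z],[A,S,V,Z],[A,S,W,Z],[A,S,X,Z],[A,U,W,Z],[A,U,X,Z]}" by auto
next
  assume "m \<in> {[A,B,V,Z],[A,S,V,Z],[A,S,W,Z],[A,S,X,Z],[A,U,W,Z],[A,U,X,Z]}"
  then show "maxchain m" by (auto simp add: maxchain_def pi_cov_iff)
qed

lemma chains_AW: "sat_chain A W c \<Longrightarrow> c = [A,S,W] \<or> c = [A,U,W]"
proof -
  assume h: "sat_chain A W c"
  then have "c \<in> set (allp A)" by (rule sat_allp)
  moreover have "last c = W" using h by (simp add: sat_chain_def)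
  ultimately show ?thesis by auto
qed


lemma chains_AX: "sat_chain A X c \<Longrightarrow> c = [A,S,X] \<or> c = [A,U,X]"
proof -
  assume h: "sat_chain A X c"
  then have "c \<in> set (allp A)" by (rule sat_allp)
  moreover have "last c = X" using h by (simp add: sat_chain_def)
  ultimately show ?thesis by auto
qed

lemma chains_UZ: "sat_chain U Z c \<Longrightarrow> c = [U,W,Z] \<or> c = [U,X,Z]"
proof -
  assume h: "sat_chain U Z c"
  then have "c \<in> set (allp U)" by (rule sat_allp)
  moreover have "last c = Z" using h by (simp add: sat_chain_def)
  ultimately show ?thesis by auto
qed

lemma lab_AU: "pi_lab A U = Gc"
  unfolding pi_lab_def by (rule the_equality) (simp_all add: pi_edges_def)
lemma lab_UW: "pi_lab U W = Gh"
  unfolding pi_lab_def by (rule the_equality) (simp_all add: pi_edges_def)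
lemma lab_AS: "pi_lab A S = Gb"
  unfolding pi_lab_def by (rule the_equality) (simp_all add: pi_edges_def)
lemma lab_SX: "pi_lab S X = Gg"
  unfolding pi_lab_def by (rule the_equality) (simp_all add: pi_edges_def)
lemma lab_UX: "pi_lab U X = Gi"
  unfolding pi_lab_def by (rule the_equality) (simp_all add: pi_edges_def)
lemma lab_XZ: "pi_lab X Z = Gl"
  unfolding pi_lab_def by (rule the_equality) (simp_all add: pi_edges_def)
lemma lab_WZ: "pi_lab W Z = Gk"
  unfolding pi_lab_def by (rule the_equality) (simp_all add: pi_edges_def)


lemma some_ASW: "(SOME m. maxchain m \<and> (\<exists>s. m = [A] @ tl [A,S,W] @ s)) = [A,S,W,Z]"
  by (rule some_equality) (auto simp: maxchain_iff)
lemma some_AUW: "(SOME m. maxchain m \<and> (\<exists>s. m = [A] @ tl [A,U,W] @ s)) = [A,U,W,Z]"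
  by (rule some_equality) (auto simp: maxchain_iff)
lemma some_ASX: "(SOME m. maxchain m \<and> (\<exists>s. m = [A] @ tl [A,S,X] @ s)) = [A,S,X,Z]"
  by (rule some_equality) (auto simp: maxchain_iff)
lemma some_AUX: "(SOME m. maxchain m \<and> (\<exists>s. m = [A] @ tl [A,U,X] @ s)) = [A,U,X,Z]"
  by (rule some_equality) (auto simp: maxchain_iff)
lemma some_UWZ: "(SOME m. maxchain m \<and> (\<exists>s. m = [A,U] @ tl [U,W,Z] @ s)) = [A,U,W,Z]"
  by (rule some_equality) (auto simp: maxchain_iff)
lemma some_AUWZ: "(SOME m. maxchain m \<and> (\<exists>s. m = [A] @ tl [A,U,W,Z] @ s)) = [A,U,W,Z]"
  by (rule some_equality) (auto simp: maxchain_iff)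

lemma rl_ASW: "rlabels lam [A] [A,S,W] = [lam [A,S,W,Z] 0, lam [A,S,W,Z] 1]"
  unfolding rlabels_def some_ASW by (simp add: upt_rec numeral_2_eq_2)
lemma rl_AUW: "rlabels lam [A] [A,U,W] = [lam [A,U,W,Z] 0, lam [A,U,W,Z] 1]"
  unfolding rlabels_def some_AUW by (simp add: upt_rec numeral_2_eq_2)
lemma rl_ASX: "rlabels lam [A] [A,S,X] = [lam [A,S,X,Z] 0, lam [A,S,X,Z] 1]"
  unfolding rlabels_def some_ASX by (simp add: upt_rec numeral_2_eq_2)
lemma rl_AUX: "rlabels lam [A] [A,U,X] = [lam [A,U,X,Z] 0, lam [A,U,X,Z] 1]"
  unfolding rlabels_def some_AUX by (simp add: upt_rec numeral_2_eq_2)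
lemma rl_UWZ: "rlabels lam [A,U] [U,W,Z] = [lam [A,U,W,Z] 1, lam [A,U,W,Z] 2]"
  unfolding rlabels_def some_UWZ by (simp add: upt_rec numeral_2_eq_2)
lemma rl_AUWZ: "rlabels lam [A] [A,U,W,Z] = [lam [A,U,W,Z] 0, lam [A,U,W,Z] 1, lam [A,U,W,Z] 2]"
  unfolding rlabels_def some_AUWZ by (simp add: upt_rec numeral_2_eq_2)

lemma si2: "strictly_increasing L [p,q] \<longleftrightarrow> lab_less L p q"
  by (auto simp: strictly_increasing_def less_Suc_eq)
lemma si3: "strictly_increasing L [p,q,r] \<longleftrightarrow> lab_less L p q \<and> lab_less L q r"
  by (auto simp: strictly_increasing_def less_Suc_eq)

lemma lex2: "lex_precedes L [p1,p2] [q1,q2] \<Longrightarrow> lab_less L p1 q1 \<or> (p1 = q1 \<and> lab_less L p2 q2)"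
  by (auto simp: lex_precedes_def less_Suc_eq)

lemma nf_AUW: "\<not> normal_form (chain_word [A,U,W])"
proof -
  have "chain_word [A,U,W] = [Gh,Gc]"
    by (simp add: chain_word_def upt_rec lab_AU lab_UW lab_AS lab_SX lab_UX lab_XZ lab_WZ)
  moreover have "([Gh,Gc],[Gf,Gb]) \<in> set rw_rules" by (simp add: rw_rules_def)
  ultimately show ?thesis unfolding normal_form_def by force
qed
lemma nf_ASX: "\<not> normal_form (chain_word [A,S,X])"
proof -
  have "chain_word [A,S,X] = [Gg,Gb]"
    by (simp add: chain_word_def upt_rec lab_AU lab_UW lab_AS lab_SX lab_UX lab_XZ lab_WZ)
  moreover have "([Gg,Gb],[Gi,Gc]) \<in> set rw_rules" by (simp add: rw_rules_def)
  ultimately show ?thesis unfolding normal_form_def by force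
qed
lemma nf_UXZ: "\<not> normal_form (chain_word [U,X,Z])"
proof -
  have "chain_word [U,X,Z] = [Gl,Gi]"
    by (simp add: chain_word_def upt_rec lab_AU lab_UW lab_AS lab_SX lab_UX lab_XZ lab_WZ)
  moreover have "([Gl,Gi],[Gk,Gh]) \<in> set rw_rules" by (simp add: rw_rules_def)
  ultimately show ?thesis unfolding normal_form_def by force
qed
lemma nf_AUWZ: "\<not> normal_form (chain_word [A,U,W,Z])"
proof -
  have "chain_word [A,U,W,Z] = [Gk] @ [Gh,Gc] @ []"
    by (simp add: chain_word_def upt_rec lab_AU lab_UW lab_AS lab_SX lab_UX lab_XZ lab_WZ)
  moreover have "([Gh,Gc],[Gf,Gb]) \<in> set rw_rules" by (simp add: rw_rules_def)
  ultimately show ?thesis unfolding normal_form_def by blast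
qed

lemma CL_min:
  assumes "is_CL_labelling L lam" "minimal_chains_PBW L lam" "sat_chain A x r" "pi_le x y"
  shows "\<exists>c0. sat_chain x y c0 \<and> strictly_increasing L (rlabels lam r c0) \<and>
    (\<forall>c. sat_chain x y c \<and> strictly_increasing L (rlabels lam r c) \<longrightarrow> c = c0) \<and>
    (\<forall>c'. sat_chain x y c' \<and> c' \<noteq> c0 \<longrightarrow> lex_precedes L (rlabels lam r c0) (rlabels lam r c')) \<and>
    normal_form (chain_word c0)"
proof -
  have P: "(\<exists>!c. sat_chain x y c \<and> strictly_increasing L (rlabels lam r c)) \<and>
        (\<forall>c c'. sat_chain x y c \<and> strictly_increasing L (rlabels lam r c) \<and>
                sat_chain x y c' \<and> c' \<noteq> c \<longrightarrow>
                lex_precedes L (rlabels lam r c) (rlabels lam r c'))"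
    using assms(1,3,4) unfolding is_CL_labelling_def by blast
  then obtain c0 where c0: "sat_chain x y c0" "strictly_increasing L (rlabels lam r c0)"
    "\<forall>c. sat_chain x y c \<and> strictly_increasing L (rlabels lam r c) \<longrightarrow> c = c0"
    by (elim conjE ex1E) blast
  have lx: "\<forall>c'. sat_chain x y c' \<and> c' \<noteq> c0 \<longrightarrow> lex_precedes L (rlabels lam r c0) (rlabels lam r c')"
    using P c0(1,2) by blast
  have PB: "\<And>c. sat_chain x y c \<Longrightarrow> (\<forall>c'. sat_chain x y c' \<and> c' \<noteq> c \<longrightarrow> lex_precedes L (rlabels lam r c) (rlabels lam r c'))
        \<Longrightarrow> normal_form (chain_word c)"
    using assms(2,3) unfolding minimal_chains_PBW_def by blast
  have "normal_form (chain_word c0)" by (rule PB[OF c0(1) lx])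
  with c0 lx show ?thesis by blast
qed

lemma pi_le_AW: "pi_le A W" unfolding pi_le_def
  by (rule converse_rtranclp_into_rtranclp[of _ A S], simp add: pi_cov_iff)
     (rule converse_rtranclp_into_rtranclp[of _ S W], simp add: pi_cov_iff, simp)
lemma pi_le_AX: "pi_le A X" unfolding pi_le_def
  by (rule converse_rtranclp_into_rtranclp[of _ A S], simp add: pi_cov_iff)
     (rule converse_rtranclp_into_rtranclp[of _ S X], simp add: pi_cov_iff, simp)
lemma pi_le_UZ: "pi_le U Z" unfolding pi_le_def
  by (rule converse_rtranclp_into_rtranclp[of _ U W], simp add: pi_cov_iff)
     (rule converse_rtranclp_into_rtranclp[of _ W Z], simp add: pi_cov_iff, simp)
lemma pi_le_AZ: "pi_le A Z" unfolding pi_le_def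
  by (rule converse_rtranclp_into_rtranclp[of _ A S], simp add: pi_cov_iff)
     (rule converse_rtranclp_into_rtranclp[of _ S W], simp add: pi_cov_iff,
      rule converse_rtranclp_into_rtranclp[of _ W Z], simp add: pi_cov_iff, simp)

theorem mainTheorem10:
  fixes Lam :: "'l set" and L :: "'l rel" and lam :: "pel list \<Rightarrow> nat \<Rightarrow> 'l"
  assumes "partial_order_on Lam L"
    and "chain_edge_labelling Lam lam"
  shows "\<not> (is_CL_labelling L lam \<and> minimal_chains_PBW L lam)"
proof
  assume H: "is_CL_labelling L lam \<and> minimal_chains_PBW L lam"
  then have CL: "is_CL_labelling L lam" and PBW: "minimal_chains_PBW L lam" by auto
  have tr: "trans L" and an: "antisym L" using assms(1)
    by (auto simp: partial_order_on_def preorder_on_def)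
  have rA: "sat_chain A A [A]" by simp
  have rU: "sat_chain A U [A,U]" by (simp add: pi_cov_iff)
  define b where "b = lam [A,S,W,Z] 0"
  define f where "f = lam [A,S,W,Z] 1"
  define g where "g = lam [A,S,X,Z] 1"
  define c where "c = lam [A,U,W,Z] 0"
  define h where "h = lam [A,U,W,Z] 1"
  define k where "k = lam [A,U,W,Z] 2"
  define i where "i = lam [A,U,X,Z] 1"
  have E: "\<And>m m' i. maxchain m \<Longrightarrow> maxchain m' \<Longrightarrow> Suc i < length m \<Longrightarrow>
      take (Suc (Suc i)) m = take (Suc (Suc i)) m' \<Longrightarrow> lam m i = lam m' i"
    using assms(2) unfolding chain_edge_labelling_def by blast
  have bb: "lam [A,S,X,Z] 0 = b" unfolding b_def by (rule E) (simp_all add: maxchain_iff)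
  have cc: "lam [A,U,X,Z] 0 = c" unfolding c_def by (rule E) (simp_all add: maxchain_iff)
  from CL_min[OF CL PBW rA pi_le_AW] obtain c0 where
    c0: "sat_chain A W c0" "strictly_increasing L (rlabels lam [A] c0)"
    "\<forall>c'. sat_chain A W c' \<and> c' \<noteq> c0 \<longrightarrow> lex_precedes L (rlabels lam [A] c0) (rlabels lam [A] c')"
    "normal_form (chain_word c0)" by blast
  have e0: "c0 = [A,S,W]" using chains_AW[OF c0(1)] c0(4) nf_AUW by auto
  have "strictly_increasing L (rlabels lam [A] [A,S,W])" using c0(2) e0 by simp
  then have bf: "lab_less L b f" unfolding rl_ASW si2 b_def f_def .
  have sAUW: "sat_chain A W [A,U,W]" by (simp add: pi_cov_iff)
  have "lex_precedes L (rlabels lam [A] [A,S,W]) (rlabels lam [A] [A,U,W])"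
    using c0(3) e0 sAUW by auto
  then have lex1: "lex_precedes L [b,f] [c,h]" unfolding rl_ASW rl_AUW b_def f_def c_def h_def .
  from CL_min[OF CL PBW rA pi_le_AX] obtain c1 where
    c1: "sat_chain A X c1" "strictly_increasing L (rlabels lam [A] c1)"
    "\<forall>c'. sat_chain A X c' \<and> c' \<noteq> c1 \<longrightarrow> lex_precedes L (rlabels lam [A] c1) (rlabels lam [A] c')"
    "normal_form (chain_word c1)" by blast
  have e1: "c1 = [A,U,X]" using chains_AX[OF c1(1)] c1(4) nf_ASX by auto
  have sASX: "sat_chain A X [A,S,X]" by (simp add: pi_cov_iff)
  have "lex_precedes L (rlabels lam [A] [A,U,X]) (rlabels lam [A] [A,S,X])"
    using c1(3) e1 sASX by auto
  then have lex2': "lex_precedes L [c,i] [b,g]" unfolding rl_ASX rl_AUX bb cc g_def i_def .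
  from CL_min[OF CL PBW rU pi_le_UZ] obtain c2 where
    c2: "sat_chain U Z c2" "strictly_increasing L (rlabels lam [A,U] c2)"
    "normal_form (chain_word c2)" by blast
  have "c2 = [U,W,Z]" using chains_UZ[OF c2(1)] c2(3) nf_UXZ by auto
  with c2 have "strictly_increasing L (rlabels lam [A,U] [U,W,Z])" by simp
  then have hk: "lab_less L h k" unfolding rl_UWZ si2 h_def k_def .
  from CL_min[OF CL PBW rA pi_le_AZ] obtain c3 where
    c3: "\<forall>c'. sat_chain A Z c' \<and> strictly_increasing L (rlabels lam [A] c') \<longrightarrow> c' = c3"
    "normal_form (chain_word c3)" by blast
  have "\<not> strictly_increasing L (rlabels lam [A] [A,U,W,Z])"
  proof
    assume "strictly_increasing L (rlabels lam [A] [A,U,W,Z])"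
    then have "[A,U,W,Z] = c3" using c3(1) by (simp add: pi_cov_iff)
    then show False using c3(2) nf_AUWZ by simp
  qed
  then have "\<not> (lab_less L c h \<and> lab_less L h k)" unfolding rl_AUWZ si3 c_def h_def k_def .
  with hk have nch: "\<not> lab_less L c h" by blast
  have "b = c"
    using lex2[OF lex1] lex2[OF lex2'] an unfolding lab_less_def antisym_def by blast
  then have fh: "lab_less L f h" using lex2[OF lex1] by (auto simp: lab_less_def)
  have "lab_less L c h"
    using bf fh \<open>b = c\<close> tr an unfolding lab_less_def trans_def antisym_def by blast
  with nch show False by simp
qed

end
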